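(* Consider the algorithm described in the context, suppose it does not terminate finitely, and suppose there is $\sigma_{\min}>0$ with $\sigma_{\min}(J_k)\ge\sigma_{\min}$ for all $k\in\mathbb{N}$. Let $\epsilon>0$. If $k_1<k_2$ are iterations such that $k\in\mathcal S$ and $\chi_k>\epsilon$ for all $k_1\le k<k_2$, then $$k_2-k_1\le\Big\lfloor\frac{\tau_0\big(f(x_0)-f_{\inf}+r(x_0)\big)+\|c(x_0)\|_2}{\kappa_\Phi\epsilon^2}\Big\rfloor,$$ with $\kappa_\Phi:=\eta\min\{\sigma_u\tau_{\min}\alpha_{\min},\ \tfrac{\sigma_c\sigma_{\min}^2}{2\kappa_c(1+\kappa_{\nabla c}^2)},\ \tfrac{\sigma_c\sigma_{\min}^2\kappa_v\alpha_{\min}}{2\kappa_c}\}$. Moreover, the maximum number of iterations before $\chi_k\le\epsilon$ for some iteration $k$ is $$\Big(\max\Big\{0,\Big\lceil\frac{\log\big(\tau_{\min}/(\alpha_0(\tau_{\min}L_g+L_J))\big)}{\log\xi}\Big\rceil\Big\}+1\Big)\Big\lfloor\frac{\tau_0\big(f(x_0)-f_{\inf}+r(x_0)\big)+\|c(x_0)\|_2}{\kappa_\Phi\epsilon^2}\Big\rfloor.$$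
   Context: Problem: $\min_{x\in\mathbb{R}^n} f(x)+r(x)$ subject to $c(x)=0$, where $f:\mathbb{R}^n\to\mathbb{R}$ and $c:\mathbb{R}^n\to\mathbb{R}^m$ ($m\le n$) are continuously differentiable and $r:\mathbb{R}^n\to\mathbb{R}_{\ge 0}$ is convex. Write $g(x)=\nabla f(x)$, $J(x)=\nabla c(x)^T$, and $f_k=f(x_k)$, $g_k=g(x_k)$, $c_k=c(x_k)$, $J_k=J(x_k)$, $r_k=r(x_k)$. All norms are Euclidean (spectral norm for matrices). Merit function: $\Phi_\tau(x)=\tau(f(x)+r(x))+\|c(x)\|_2$. Algorithm: inputs $x_0$, $\alpha_0>0$, $\tau_{-1}>0$; constants $\kappa_v>0$, $\sigma_c,\epsilon_\tau,\xi,\eta\in(0,1)$, $\sigma_u\in(0,1/2]$, $\bar\sigma_u:=\sigma_u+\tfrac12$. For $k=0,1,\dots$: 1. If $J_k^Tc_k\ne0$, compute $v_k$ with $v_k\in\mathrm{Range}(J_k^T)$, $\|v_k\|_2\le\kappa_v\alpha_k\|J_k^Tc_k\|_2$, $\|c_k+J_kv_k\|_2\le\|c_k+J_kv_k^c\|_2$, where $v_k^c=-\beta_k^cJ_k^Tc_k$ with $\beta_k^c$ minimizing $\tfrac12\|c_k-\beta J_kJ_k^Tc_k\|_2^2$ over $0\le\beta\le\kappa_v\alpha_k$. Otherwise set $v_k=0$, and if $c_k\ne0$ terminate. 2. Let $u_k$ be the unique minimizer of $g_k^Tu+\tfrac1{2\alpha_k}\|u\|_2^2+r(x_k+v_k+u)$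 subject to $J_ku=0$; set $s_k=v_k+u_k$. If $s_k=0$, terminate. By the optimality conditions there exist $g_{r,k}\in\partial r(x_k+s_k)$ and $y_k\in\mathbb{R}^m$ with $g_k+\tfrac1{\alpha_k}u_k+g_{r,k}-J_k^Ty_k=0$; $g_{r,k},y_k$ denote such vectors. 3. Let $D_k:=g_k^Ts_k+\bar\sigma_u\|s_k\|_2^2/\alpha_k+r(x_k+s_k)-r_k$; $\tau_{k,\mathrm{trial}}=\infty$ if $D_k\le0$, else $\tau_{k,\mathrm{trial}}=(1-\sigma_c)(\|c_k\|_2-\|c_k+J_kv_k\|_2)/D_k$. Set $\tau_k=\tau_{k-1}$ if $\tau_{k-1}\le\tau_{k,\mathrm{trial}}$, else $\tau_k=\min\{(1-\epsilon_\tau)\tau_{k-1},\tau_{k,\mathrm{trial}}\}$. 4. With $\Delta q_k(s,\tau):=-\tau(g_k^Ts+\tfrac1{2\alpha_k}\|s\|_2^2+r(x_k+s)-r_k)+\|c_k\|_2-\|c_k+J_ks\|_2$: if $\Phi_{\tau_k}(x_k+s_k)\le\Phi_{\tau_k}(x_k)-\eta\Delta q_k(s_k,\tau_k)$ set $x_{k+1}=x_k+s_k$, $\alpha_{k+1}=\alpha_k$ (iteration $k$ successful; $\mathcal S$ is the set of successful iterations); else $x_{k+1}=x_k$, $\alpha_{k+1}=\xi\alpha_k$. KKT residual: $\chi_k:=\max\{\|g_k+g_{r,k}-J_k^Ty_k\|_2,\ \|c_k\|_2\}$. Standing assumption: there is an open convex set $\mathcal X$ containing all iterates $x_k$ and trial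 points $x_k+s_k$, and positive constants such that for all $x\in\mathcal X$: $f(x)\ge f_{\inf}$, $\|\nabla f(x)\|_2\le\kappa_{\nabla f}$, $\|c(x)\|_2\le\kappa_c$, $\|J(x)\|_2\le\kappa_{\nabla c}$, every $w\in\partial r(x)$ has $\|w\|_2\le\kappa_{\partial r}$; $\nabla f$ is $L_g$-Lipschitz and $J$ is $L_J$-Lipschitz on $\mathcal X$. Constants: with $K:=2\kappa_v\kappa_{\nabla c}(\kappa_{\nabla f}+\kappa_{\partial r}+\bar\sigma_u\kappa_c\kappa_v\kappa_{\nabla c})$, $\tau_{\min,\mathrm{trial}}:=\min\{(1-\sigma_c)\kappa_v\sigma_{\min}^2/K,\ (1-\sigma_c)(\sigma_{\min}/\kappa_{\nabla c})^2/(K\alpha_0)\}$, $\tau_{\min}:=\min\{\tau_0,(1-\epsilon_\tau)\tau_{\min,\mathrm{trial}}\}$, and $\alpha_{\min}:=\min\{\alpha_0,\xi\tau_{\min}/(\tau_{\min}L_g+L_J)\}$. *)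

theory Defs
  imports "HOL-Analysis.Analysis"
begin

definition subgrad :: "('a::real_inner \<Rightarrow> real) \<Rightarrow> 'a \<Rightarrow> 'a \<Rightarrow> bool" where
  "subgrad r z w \<longleftrightarrow> (\<forall>z'. r z' \<ge> r z + inner w (z' - z))"

definition spec_norm :: "real^'n^'m \<Rightarrow> real" where
  "spec_norm A = onorm (\<lambda>h. A *v h)"

text \<open>Smallest singular value of an m x n matrix with m \<le> n,
  i.e. sigma_m(A) = min over unit w of the norm of A^T w.\<close>
definition sigma_min_mat :: "real^'n^'m \<Rightarrow> real" where
  "sigma_min_mat A = Inf {norm (transpose A *v w) | w. norm w = 1}"

definition merit :: "('a \<Rightarrow> real) \<Rightarrow> ('a \<Rightarrow> real) \<Rightarrow> ('a \<Rightarrow> 'b::real_normed_vector)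
    \<Rightarrow> real \<Rightarrow> 'a \<Rightarrow> real" where
  "merit f r c t z = t * (f z + r z) + norm (c z)"

end

theory Submission
  imports Defs
begin

lemma mv_bound: "norm ((A::real^'n^'m) *v h) \<le> spec_norm A * norm h"
  unfolding spec_norm_def by (rule onorm) simp

lemma transp_inner: "(transpose (A::real^'n^'m) *v w) \<bullet> z = w \<bullet> (A *v z)"
  by (simp add: dot_lmul_matrix)

lemma transp_bound:
  assumes "spec_norm (A::real^'n^'m) \<le> k"
  shows "norm (transpose A *v w) \<le> k * norm w"
proof -
  let ?a = "transpose A *v w"
  have k0: "k \<ge> 0" using assms onorm_pos_le[OF matrix_vector_mul_bounded_linear[of A]] unfolding spec_norm_def by simp
  have "norm ?a ^ 2 = ?a \<bullet> ?a" by (simp only: power2_norm_eq_inner)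
  also have "\<dots> = w \<bullet> (A *v ?a)" by (rule transp_inner)
  also have "\<dots> \<le> norm w * norm (A *v ?a)" by (rule norm_cauchy_schwarz)
  also have "\<dots> \<le> norm w * (k * norm ?a)"
    by (intro mult_left_mono order.trans[OF mv_bound] mult_right_mono assms) auto
  finally have "norm ?a * norm ?a \<le> norm ?a * (k * norm w)" by (simp add: power2_eq_square algebra_simps)
  then show ?thesis
    by (cases "norm ?a = 0") (use k0 in auto)
qed

lemma sigma_lower:
  assumes "sigma_min_mat (A::real^'n^'m) \<ge> s"
  shows "norm (transpose A *v w) \<ge> s * norm w"
proof (cases "w = 0")
  case True then show ?thesis by simp
next
  case False
  let ?w = "(1 / norm w) *\<^sub>R w"
  have "norm ?w = 1" using False by simp
  then have "sigma_min_mat A \<le> norm (transpose A *v ?w)"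
    unfolding sigma_min_mat_def
    by (intro cInf_lower) (auto intro: bdd_belowI[where m=0])
  also have "\<dots> = norm (transpose A *v w) / norm w"
    by (simp add: matrix_vector_mult_scaleR)
  finally have "s \<le> norm (transpose A *v w) / norm w" using assms by simp
  then show ?thesis using False by (simp add: field_simps)
qed

lemma sigma_le:
  assumes "sigma_min_mat (A::real^'n^'m) \<ge> s" "spec_norm A \<le> k"
  shows "s \<le> k"
proof -
  obtain i :: 'm where True by simp
  let ?w = "axis i (1::real)"
  have "s * norm ?w \<le> norm (transpose A *v ?w)" by (rule sigma_lower[OF assms(1)])
  also have "\<dots> \<le> k * norm ?w" by (rule transp_bound[OF assms(2)])
  finally show ?thesis by simp
qed

lemma descent_f:
  fixes f :: "'a::real_inner \<Rightarrow> real"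
  assumes f_deriv: "\<And>z. (f has_derivative (\<lambda>h. g z \<bullet> h)) (at z)"
    and cX: "convex X" and zX: "z \<in> X" and zhX: "z + h \<in> X"
    and lip: "\<And>z z'. z \<in> X \<Longrightarrow> z' \<in> X \<Longrightarrow> norm (g z - g z') \<le> L * norm (z - z')"
  shows "f (z + h) \<le> f z + g z \<bullet> h + L / 2 * (norm h)\<^sup>2"
proof -
  define phi where "phi t = f (z + t *\<^sub>R h) - t * (g z \<bullet> h) - L / 2 * t\<^sup>2 * (norm h)\<^sup>2" for t
  have "phi 1 \<le> phi 0"
  proof (rule DERIV_nonpos_imp_nonincreasing[of 0 1 phi])
    fix t :: real assume t: "0 \<le> t" "t \<le> 1"
    have ztX: "z + t *\<^sub>R h \<in> X"
    proof -
      have "z + t *\<^sub>R h = (1 - t) *\<^sub>R z + t *\<^sub>R (z + h)" by (simp add: algebra_simps)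
      then show ?thesis using convexD_alt[OF cX zX zhX, of t] t by simp
    qed
    have d1: "((\<lambda>t. f (z + t *\<^sub>R h)) has_real_derivative (g (z + t *\<^sub>R h) \<bullet> h)) (at t)"
    proof -
      have "((\<lambda>t. z + t *\<^sub>R h) has_derivative (\<lambda>d. d *\<^sub>R h)) (at t)"
        by (auto intro!: derivative_eq_intros)
      from has_derivative_compose[OF this f_deriv]
      have "((\<lambda>t. f (z + t *\<^sub>R h)) has_derivative (\<lambda>d. g (z + t *\<^sub>R h) \<bullet> (d *\<^sub>R h))) (at t)" .
      then show ?thesis
        by (rule has_derivative_imp_has_field_derivative) (simp add: algebra_simps)
    qed
    have d: "(phi has_real_derivative (g (z + t *\<^sub>R h) \<bullet> h - g z \<bullet> h - L * t * (norm h)\<^sup>2)) (at t)"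
      unfolding phi_def
      by (rule d1 derivative_eq_intros refl | simp)+
    have "g (z + t *\<^sub>R h) \<bullet> h - g z \<bullet> h = (g (z + t *\<^sub>R h) - g z) \<bullet> h" by (simp add: inner_diff_left)
    also have "\<dots> \<le> norm (g (z + t *\<^sub>R h) - g z) * norm h" by (rule norm_cauchy_schwarz)
    also have "\<dots> \<le> (L * norm (t *\<^sub>R h)) * norm h"
      by (intro mult_right_mono) (use lip[OF ztX zX] in auto)
    also have "\<dots> = L * t * (norm h)\<^sup>2" using t by (simp add: power2_eq_square)
    finally show "\<exists>y. (phi has_real_derivative y) (at t) \<and> y \<le> 0" using d by auto
  qed simp
  then show ?thesis unfolding phi_def by simp
qed

lemma descent_c:
  fixes c :: "real^'n \<Rightarrow> real^'m" and J :: "real^'n \<Rightarrow> real^'n^'m"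
  assumes c_deriv: "\<And>z. (c has_derivative (\<lambda>h. J z *v h)) (at z)"
    and cX: "convex X" and zX: "z \<in> X" and zhX: "z + h \<in> X"
    and lip: "\<And>z z'. z \<in> X \<Longrightarrow> z' \<in> X \<Longrightarrow> spec_norm (J z - J z') \<le> L * norm (z - z')"
    and L0: "L \<ge> 0"
  shows "norm (c (z + h) - c z - J z *v h) \<le> L / 2 * (norm h)\<^sup>2"
proof -
  define e where "e = c (z + h) - c z - J z *v h"
  define phi where "phi t = e \<bullet> c (z + t *\<^sub>R h) - t * (e \<bullet> (J z *v h)) - norm e * L / 2 * t\<^sup>2 * (norm h)\<^sup>2" for t
  have "phi 1 \<le> phi 0"
  proof (rule DERIV_nonpos_imp_nonincreasing[of 0 1 phi])
    fix t :: real assume t: "0 \<le> t" "t \<le> 1"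
    have ztX: "z + t *\<^sub>R h \<in> X"
    proof -
      have "z + t *\<^sub>R h = (1 - t) *\<^sub>R z + t *\<^sub>R (z + h)" by (simp add: algebra_simps)
      then show ?thesis using convexD_alt[OF cX zX zhX, of t] t by simp
    qed
    have d1: "((\<lambda>t. e \<bullet> c (z + t *\<^sub>R h)) has_real_derivative (e \<bullet> (J (z + t *\<^sub>R h) *v h))) (at t)"
    proof -
      have "((\<lambda>t. z + t *\<^sub>R h) has_derivative (\<lambda>d. d *\<^sub>R h)) (at t)"
        by (auto intro!: derivative_eq_intros)
      from has_derivative_compose[OF this c_deriv]
      have "((\<lambda>t. c (z + t *\<^sub>R h)) has_derivative (\<lambda>d. J (z + t *\<^sub>R h) *v (d *\<^sub>R h))) (at t)" .
      from has_derivative_inner_right[OF this, of e]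
      have "((\<lambda>t. e \<bullet> c (z + t *\<^sub>R h)) has_derivative (\<lambda>d. e \<bullet> (J (z + t *\<^sub>R h) *v (d *\<^sub>R h)))) (at t)" .
      then show ?thesis
        by (rule has_derivative_imp_has_field_derivative) (simp add: algebra_simps matrix_vector_mult_scaleR)
    qed
    have d: "(phi has_real_derivative (e \<bullet> (J (z + t *\<^sub>R h) *v h) - e \<bullet> (J z *v h) - norm e * L * t * (norm h)\<^sup>2)) (at t)"
      unfolding phi_def
      by (rule d1 derivative_eq_intros refl | simp)+
    have "e \<bullet> (J (z + t *\<^sub>R h) *v h) - e \<bullet> (J z *v h) = e \<bullet> ((J (z + t *\<^sub>R h) - J z) *v h)"
      by (simp add: inner_diff_right matrix_vector_mult_diff_rdistrib)
    also have "\<dots> \<le> norm e * norm ((J (z + t *\<^sub>R h) - J z) *v h)" by (rule norm_cauchy_schwarz)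
    also have "\<dots> \<le> norm e * (spec_norm (J (z + t *\<^sub>R h) - J z) * norm h)"
      by (intro mult_left_mono mv_bound) auto
    also have "\<dots> \<le> norm e * ((L * norm (t *\<^sub>R h)) * norm h)"
      by (intro mult_left_mono mult_right_mono) (use lip[OF ztX zX] in auto)
    also have "\<dots> = norm e * L * t * (norm h)\<^sup>2" using t by (simp add: power2_eq_square)
    finally show "\<exists>y. (phi has_real_derivative y) (at t) \<and> y \<le> 0" using d by auto
  qed simp
  then have "e \<bullet> e \<le> norm e * (L / 2 * (norm h)\<^sup>2)"
    unfolding phi_def e_def by (simp add: inner_diff_right algebra_simps)
  then have "norm e * norm e \<le> norm e * (L / 2 * (norm h)\<^sup>2)"
    by (simp add: power2_norm_eq_inner[symmetric] power2_eq_square)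
  then show ?thesis unfolding e_def[symmetric]
    by (cases "norm e = 0") (use L0 in \<open>auto simp: e_def\<close>)
qed


declare transpose_matrix_vector [simp del]

lemma succ_arith:
  fixes tau alpha eta dq f0 f1 r0 r1 c0 c1 cJ gs L LJ Q :: real
  assumes tp: "tau > 0" and ap: "alpha > 0" and eta: "eta < 1" and dq0: "dq \<ge> 0"
    and fd: "f1 \<le> f0 + gs + L / 2 * Q" and cd: "c1 \<le> cJ + LJ / 2 * Q"
    and key: "alpha * (tau * L + LJ) \<le> tau" and Q0: "Q \<ge> 0"
    and dqe: "dq = - tau * (gs + 1 / (2 * alpha) * Q + r1 - r0) + c0 - cJ"
  shows "tau * (f1 + r1) + c1 \<le> tau * (f0 + r0) + c0 - eta * dq"
proof -
  have t1: "tau * f1 \<le> tau * (f0 + gs + L / 2 * Q)" using fd tp by (intro mult_left_mono) auto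
  have "alpha * ((tau * L + LJ) * Q) \<le> tau * Q" using mult_right_mono[OF key Q0] by (simp add: algebra_simps)
  then have t2: "(tau * L + LJ) * Q / 2 \<le> tau * Q / (2 * alpha)" using ap by (simp add: field_simps)
  have t3: "eta * dq \<le> dq" using mult_right_mono[of eta 1 dq] eta dq0 by simp
  have e: "- tau * (gs + 1 / (2 * alpha) * Q + r1 - r0) = - (tau * gs) - tau * Q / (2 * alpha) - tau * r1 + tau * r0"
    by (simp add: algebra_simps)
  have e2: "tau * (f0 + gs + L / 2 * Q) = tau * f0 + tau * gs + tau * L * Q / 2" by (simp add: algebra_simps)
  have e3: "(tau * L + LJ) * Q / 2 = tau * L * Q / 2 + LJ / 2 * Q" by (simp add: algebra_simps)
  have e4: "tau * (f1 + r1) = tau * f1 + tau * r1" "tau * (f0 + r0) = tau * f0 + tau * r0" by (simp_all add: algebra_simps)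
  show ?thesis using t1 t2 t3 e e2 e3 e4 dqe cd by (smt (verit))
qed

lemma dq_arith:
  fixes tau alpha gs Q r1 r0 nc n1 su sc D dq :: real
  assumes ap: "alpha > 0"
    and dqe: "dq = - tau * (gs + 1 / (2 * alpha) * Q + r1 - r0) + nc - n1"
    and De: "D = gs + (su + 1/2) * Q / alpha + r1 - r0"
    and tD: "tau * D \<le> (1 - sc) * (nc - n1)"
  shows "dq \<ge> tau * su * Q / alpha + sc * (nc - n1)"
proof -
  have "- tau * (gs + 1 / (2 * alpha) * Q + r1 - r0) = - (tau * D) + tau * su * Q / alpha"
    unfolding De using ap by (simp add: field_simps)
  then show ?thesis using dqe tD by (simp add: algebra_simps)
qed

lemma b0_final:
  fixes P al a Lg :: real
  assumes Lg: "Lg > 0" and al: "al > 0"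
    and H: "\<And>t. 0 \<le> t \<Longrightarrow> t \<le> 1 \<Longrightarrow> 0 < P - t * al * a\<^sup>2 + Lg * t\<^sup>2 * al\<^sup>2 * a\<^sup>2 / 2"
    and P1: "P \<le> a\<^sup>2 / (2 * Lg)" and P2: "P \<le> al * a\<^sup>2 / 2"
  shows False
proof (cases "al * Lg \<ge> 1")
  case True
  define t where "t = 1 / (al * Lg)"
  have t0: "0 \<le> t" "t \<le> 1" unfolding t_def using True al Lg by auto
  have e1: "t * al * a\<^sup>2 = a\<^sup>2 / Lg" unfolding t_def using al Lg by (simp add: field_simps)
  have e2: "Lg * t\<^sup>2 * al\<^sup>2 * a\<^sup>2 / 2 = a\<^sup>2 / (2 * Lg)" unfolding t_def using al Lg by (simp add: field_simps power2_eq_square)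
  have "0 < P - a\<^sup>2 / Lg + a\<^sup>2 / (2 * Lg)" using H[OF t0] e1 e2 by simp
  moreover have "a\<^sup>2 / Lg = 2 * (a\<^sup>2 / (2 * Lg))" using Lg by simp
  ultimately show False using P1 by linarith
next
  case False
  have "Lg * 1\<^sup>2 * al\<^sup>2 * a\<^sup>2 / 2 = (al * Lg) * (al * a\<^sup>2 / 2)" by (simp add: power2_eq_square algebra_simps)
  also have "\<dots> \<le> 1 * (al * a\<^sup>2 / 2)" using False al by (intro mult_right_mono) auto
  finally have "Lg * 1\<^sup>2 * al\<^sup>2 * a\<^sup>2 / 2 \<le> al * a\<^sup>2 / 2" by simp
  then show False using H[of 1] P2 by simp
qed

lemma b0_mid:
  fixes t A gs Lg Q W V al a r0 r1 P :: real
  assumes t: "0 \<le> t" "t \<le> 1" and d: "0 \<le> A + t * gs + Lg / 2 * t\<^sup>2 * Q"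
    and gs: "gs \<le> W * V - al * a\<^sup>2 + r0 - r1" and Q: "Q = V\<^sup>2 + al\<^sup>2 * a\<^sup>2"
    and r: "r0 \<ge> 0" "r1 \<ge> 0" and WV: "W \<ge> 0" "V \<ge> 0" and Lg: "Lg > 0"
    and LV: "Lg * V \<le> 2 * W" and AP: "A + r0 + 2 * W * V < P"
  shows "0 < P - t * al * a\<^sup>2 + Lg * t\<^sup>2 * al\<^sup>2 * a\<^sup>2 / 2"
proof -
  have "t * gs \<le> t * (W * V - al * a\<^sup>2 + r0 - r1)" using gs t by (intro mult_left_mono) auto
  also have "\<dots> = t * (W * V) - t * al * a\<^sup>2 + t * r0 - t * r1" by (simp add: algebra_simps)
  finally have g1: "t * gs \<le> t * (W * V) - t * al * a\<^sup>2 + t * r0 - t * r1" .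
  have g2: "t * (W * V) \<le> W * V" using t WV by (simp add: mult_left_le_one_le)
  have g3: "t * r0 \<le> r0" using t r by (simp add: mult_left_le_one_le)
  have g4: "t * r1 \<ge> 0" using t r by simp
  have t2: "t\<^sup>2 \<le> 1" using t by (simp add: power_le_one)
  have g5: "Lg / 2 * t\<^sup>2 * Q = Lg / 2 * t\<^sup>2 * V\<^sup>2 + Lg * t\<^sup>2 * al\<^sup>2 * a\<^sup>2 / 2" unfolding Q by (simp add: algebra_simps)
  have "Lg / 2 * t\<^sup>2 * V\<^sup>2 \<le> Lg / 2 * 1 * V\<^sup>2" using t2 Lg by (intro mult_right_mono mult_left_mono) auto
  also have "\<dots> = V * (Lg * V) / 2" by (simp add: power2_eq_square)
  also have "\<dots> \<le> V * (2 * W) / 2" using LV WV by (intro divide_right_mono mult_left_mono) auto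
  finally have g6: "Lg / 2 * t\<^sup>2 * V\<^sup>2 \<le> W * V" by (simp add: mult.commute)
  show ?thesis using d g1 g2 g3 g4 g5 g6 AP by linarith
qed


theorem theorem3p16:
  fixes f :: "real^'n \<Rightarrow> real" and g :: "real^'n \<Rightarrow> real^'n"
    and c :: "real^'n \<Rightarrow> real^'m" and J :: "real^'n \<Rightarrow> real^'n^'m"
    and r :: "real^'n \<Rightarrow> real"
    and x v u gr :: "nat \<Rightarrow> real^'n" and y :: "nat \<Rightarrow> real^'m"
    and alpha tau :: "nat \<Rightarrow> real"
    and taum1 kv sigc epstau xi eta sigu :: real
    and X :: "(real^'n) set"
    and finf kgf kc kgc kdr Lg LJ sigmin eps :: real
  assumes m_le_n: "CARD('m) \<le> CARD('n)"
    and f_deriv: "\<And>z. (f has_derivative (\<lambda>h. g z \<bullet> h)) (at z)"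
    and g_cont: "continuous_on UNIV g"
    and c_deriv: "\<And>z. (c has_derivative (\<lambda>h. J z *v h)) (at z)"
    and J_cont: "continuous_on UNIV J"
    and r_convex: "convex_on UNIV r" and r_nonneg: "\<And>z. r z \<ge> 0"
    and alpha0_pos: "alpha 0 > 0" and taum1_pos: "taum1 > 0"
    and kv_pos: "kv > 0"
    and sigc: "0 < sigc" "sigc < 1" and epstau: "0 < epstau" "epstau < 1"
    and xi: "0 < xi" "xi < 1" and eta: "0 < eta" "eta < 1"
    and sigu: "0 < sigu" "sigu \<le> 1/2"
  defines "sigbar \<equiv> sigu + 1/2"
    and "s \<equiv> \<lambda>k. v k + u k"
  assumes
    \<comment> \<open>Step 1\<close>
    step1: "\<And>k. transpose (J (x k)) *v c (x k) \<noteq> 0 \<Longrightarrow>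
        v k \<in> range (\<lambda>w. transpose (J (x k)) *v w)
      \<and> norm (v k) \<le> kv * alpha k * norm (transpose (J (x k)) *v c (x k))
      \<and> (\<exists>betac. 0 \<le> betac \<and> betac \<le> kv * alpha k
           \<and> (\<forall>beta. 0 \<le> beta \<and> beta \<le> kv * alpha k \<longrightarrow>
                (1/2) * (norm (c (x k) - betac *\<^sub>R (J (x k) *v (transpose (J (x k)) *v c (x k)))))\<^sup>2
                \<le> (1/2) * (norm (c (x k) - beta *\<^sub>R (J (x k) *v (transpose (J (x k)) *v c (x k)))))\<^sup>2)
           \<and> norm (c (x k) + J (x k) *v v k)
               \<le> norm (c (x k) + J (x k) *v (- (betac *\<^sub>R (transpose (J (x k)) *v c (x k))))))"
    and step1_zero: "\<And>k. transpose (J (x k)) *v c (x k) = 0 \<Longrightarrow> v k = 0"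
    \<comment> \<open>no finite termination\<close>
    and noterm_c: "\<And>k. transpose (J (x k)) *v c (x k) = 0 \<Longrightarrow> c (x k) = 0"
    and noterm_s: "\<And>k. s k \<noteq> 0"
    \<comment> \<open>Step 2\<close>
    and u_feas: "\<And>k. J (x k) *v u k = 0"
    and u_min: "\<And>k w. J (x k) *v w = 0 \<Longrightarrow>
        g (x k) \<bullet> u k + 1 / (2 * alpha k) * (norm (u k))\<^sup>2 + r (x k + v k + u k)
        \<le> g (x k) \<bullet> w + 1 / (2 * alpha k) * (norm w)\<^sup>2 + r (x k + v k + w)"
    and gr_sub: "\<And>k. subgrad r (x k + s k) (gr k)"
    and kkt: "\<And>k. g (x k) + (1 / alpha k) *\<^sub>R u k + gr k - transpose (J (x k)) *v y k = 0"
  defines "D \<equiv> \<lambda>k. g (x k) \<bullet> s k + sigbar * (norm (s k))\<^sup>2 / alpha k + r (x k + s k) - r (x k)"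
    and "taup \<equiv> \<lambda>k. if k = 0 then taum1 else tau (k - 1)"
  assumes
    \<comment> \<open>Step 3\<close>
    tau_upd: "\<And>k. tau k = (if D k \<le> 0 then taup k
       else (let t = (1 - sigc) * (norm (c (x k)) - norm (c (x k) + J (x k) *v v k)) / D k
             in if taup k \<le> t then taup k else min ((1 - epstau) * taup k) t))"
  defines "dq \<equiv> \<lambda>k w t. - t * (g (x k) \<bullet> w + 1 / (2 * alpha k) * (norm w)\<^sup>2 + r (x k + w) - r (x k))
                  + norm (c (x k)) - norm (c (x k) + J (x k) *v w)"
  defines "S \<equiv> {k. merit f r c (tau k) (x k + s k) \<le> merit f r c (tau k) (x k) - eta * dq k (s k) (tau k)}"
  assumes
    \<comment> \<open>Step 4\<close>
    succ: "\<And>k. k \<in> S \<Longrightarrow> x (Suc k) = x k + s k \<and> alpha (Suc k) = alpha k"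
    and unsucc: "\<And>k. k \<notin> S \<Longrightarrow> x (Suc k) = x k \<and> alpha (Suc k) = xi * alpha k"
    \<comment> \<open>Standing assumption\<close>
    and X_open: "open X" and X_convex: "convex X"
    and x_in_X: "\<And>k. x k \<in> X" and trial_in_X: "\<And>k. x k + s k \<in> X"
    and consts_pos: "kgf > 0" "kc > 0" "kgc > 0" "kdr > 0" "Lg > 0" "LJ > 0"
    and f_lb: "\<And>z. z \<in> X \<Longrightarrow> f z \<ge> finf"
    and g_bd: "\<And>z. z \<in> X \<Longrightarrow> norm (g z) \<le> kgf"
    and c_bd: "\<And>z. z \<in> X \<Longrightarrow> norm (c z) \<le> kc"
    and J_bd: "\<And>z. z \<in> X \<Longrightarrow> spec_norm (J z) \<le> kgc"
    and subgrad_bd: "\<And>z w. z \<in> X \<Longrightarrow> subgrad r z w \<Longrightarrow> norm w \<le> kdr"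
    and g_lip: "\<And>z z'. z \<in> X \<Longrightarrow> z' \<in> X \<Longrightarrow> norm (g z - g z') \<le> Lg * norm (z - z')"
    and J_lip: "\<And>z z'. z \<in> X \<Longrightarrow> z' \<in> X \<Longrightarrow> spec_norm (J z - J z') \<le> LJ * norm (z - z')"
    \<comment> \<open>uniform lower bound on singular values\<close>
    and sigmin_pos: "sigmin > 0"
    and sigmin_bd: "\<And>k. sigma_min_mat (J (x k)) \<ge> sigmin"
    and eps_pos: "eps > 0"
  defines "chi \<equiv> \<lambda>k. max (norm (g (x k) + gr k - transpose (J (x k)) *v y k)) (norm (c (x k)))"
    and "K \<equiv> 2 * kv * kgc * (kgf + kdr + sigbar * kc * kv * kgc)"
  defines "taumintrial \<equiv> min ((1 - sigc) * kv * sigmin\<^sup>2 / K)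
                              ((1 - sigc) * (sigmin / kgc)\<^sup>2 / (K * alpha 0))"
  defines "taumin \<equiv> min (tau 0) ((1 - epstau) * taumintrial)"
  defines "alphamin \<equiv> min (alpha 0) (xi * taumin / (taumin * Lg + LJ))"
  defines "kPhi \<equiv> eta * min (sigu * taumin * alphamin)
              (min (sigc * sigmin\<^sup>2 / (2 * kc * (1 + kgc\<^sup>2)))
                   (sigc * sigmin\<^sup>2 * kv * alphamin / (2 * kc)))"
  defines "B \<equiv> \<lfloor>(tau 0 * (f (x 0) - finf + r (x 0)) + norm (c (x 0))) / (kPhi * eps\<^sup>2)\<rfloor>"
  shows "(\<forall>k1 k2. k1 < k2 \<and> (\<forall>k. k1 \<le> k \<and> k < k2 \<longrightarrow> k \<in> S \<and> chi k > eps)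
            \<longrightarrow> int (k2 - k1) \<le> B)
       \<and> (\<exists>k. int k \<le> (max 0 \<lceil>ln (taumin / (alpha 0 * (taumin * Lg + LJ))) / ln xi\<rceil> + 1) * B
              \<and> chi k \<le> eps)"
proof -
  note Xf = x_in_X trial_in_X
  have alpha_pos: "alpha k > 0" for k
  proof (induction k)
    case (Suc k) then show ?case using succ[of k] unsucc[of k] xi by (cases "k \<in> S") auto
  qed (use alpha0_pos in auto)
  have alpha_le0: "alpha k \<le> alpha 0" for k
  proof (induction k)
    case (Suc k)
    have "alpha (Suc k) \<le> alpha k"
      using succ[of k] unsucc[of k] xi alpha_pos[of k] by (cases "k \<in> S") auto
    then show ?case using Suc by simp
  qed simp
  have gb: "norm (g (x k)) \<le> kgf" for k using g_bd x_in_X by blast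
  have cb: "norm (c (x k)) \<le> kc" for k using c_bd x_in_X by blast
  have Jb: "spec_norm (J (x k)) \<le> kgc" for k using J_bd x_in_X by blast
  have grb: "norm (gr k) \<le> kdr" for k using subgrad_bd[OF trial_in_X gr_sub] by blast
  have sig_le: "sigmin \<le> kgc" using sigma_le[OF sigmin_bd Jb] by blast
  define a where "a = (\<lambda>k. transpose (J (x k)) *v c (x k))"
  have ab: "norm (a k) \<le> kgc * norm (c (x k))" for k unfolding a_def by (rule transp_bound[OF Jb])
  have al: "norm (a k) \<ge> sigmin * norm (c (x k))" for k unfolding a_def by (rule sigma_lower[OF sigmin_bd])
  have a0c: "a k = 0 \<longleftrightarrow> c (x k) = 0" for k
    using noterm_c[of k] unfolding a_def by auto
  have v0: "a k = 0 \<Longrightarrow> v k = 0" for k using step1_zero unfolding a_def by blast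
  have orth: "v k \<bullet> u k = 0" for k
  proof (cases "a k = 0")
    case True then show ?thesis using v0 by simp
  next
    case False
    then obtain w where "v k = transpose (J (x k)) *v w" using step1[of k] unfolding a_def by auto
    then show ?thesis by (simp add: transp_inner u_feas)
  qed
  have Js: "J (x k) *v s k = J (x k) *v v k" for k
    by (simp add: s_def matrix_vector_right_distrib u_feas)
  have ns: "(norm (s k))\<^sup>2 = (norm (v k))\<^sup>2 + (norm (u k))\<^sup>2" for k
    unfolding s_def by (rule norm_add_Pythagorean) (simp add: orthogonal_def orth)
  have gu: "(g (x k) + gr k) \<bullet> u k = - (norm (u k))\<^sup>2 / alpha k" for k
  proof -
    have "(g (x k) + (1 / alpha k) *\<^sub>R u k + gr k - transpose (J (x k)) *v y k) \<bullet> u k = 0"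
      by (simp add: kkt)
    moreover have "(transpose (J (x k)) *v y k) \<bullet> u k = 0" by (simp add: transp_inner u_feas)
    ultimately have "(g (x k) + gr k) \<bullet> u k + (1 / alpha k) * (u k \<bullet> u k) = 0"
      by (simp add: inner_add_left inner_diff_left algebra_simps)
    then show ?thesis by (simp add: power2_norm_eq_inner field_simps)
  qed
  have rs: "r (x k + s k) - r (x k) \<le> gr k \<bullet> s k" for k
  proof -
    have "r (x k) \<ge> r (x k + s k) + gr k \<bullet> (x k - (x k + s k))"
      using gr_sub[of k] unfolding subgrad_def by blast
    then show ?thesis by (simp add: inner_diff_right inner_add_right)
  qed
  have vb: "norm (v k) \<le> kv * alpha k * norm (a k)" for k
  proof (cases "a k = 0")
    case True then show ?thesis using v0 by simp
  next
    case False then show ?thesis using step1[of k] unfolding a_def by auto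
  qed
  have kpos: "kgf > 0" "kc > 0" "kgc > 0" "kdr > 0" "Lg > 0" "LJ > 0" using consts_pos by auto
  have sigbar_le: "sigbar \<le> 1" "sigbar > 0" using sigu unfolding sigbar_def by auto
  have K_pos: "K > 0" unfolding K_def using kpos kv_pos sigbar_le by (auto intro!: mult_pos_pos add_pos_pos)
  have Dle: "D k \<le> (kgf + kdr) * norm (v k) + sigbar * (norm (v k))\<^sup>2 / alpha k" for k
  proof -
    have ggr: "norm (g (x k) + gr k) \<le> kgf + kdr" using norm_triangle_le gb[of k] grb[of k] by (meson add_mono)
    have h1: "(g (x k) + gr k) \<bullet> v k \<le> (kgf + kdr) * norm (v k)"
      by (meson ggr norm_cauchy_schwarz mult_right_mono norm_ge_zero order_trans)
    have h0: "D k \<le> (g (x k) + gr k) \<bullet> s k + sigbar * (norm (s k))\<^sup>2 / alpha k"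
      unfolding D_def using rs[of k] by (simp add: inner_add_left)
    have h2: "(g (x k) + gr k) \<bullet> s k = (g (x k) + gr k) \<bullet> v k - (norm (u k))\<^sup>2 / alpha k"
      using gu[of k] by (simp add: s_def inner_add_right)
    have h3: "sigbar * (norm (s k))\<^sup>2 / alpha k = sigbar * (norm (v k))\<^sup>2 / alpha k + sigbar * (norm (u k))\<^sup>2 / alpha k"
      using ns[of k] by (simp add: distrib_left add_divide_distrib)
    have h4: "sigbar * (norm (u k))\<^sup>2 / alpha k \<le> (norm (u k))\<^sup>2 / alpha k"
      using sigbar_le alpha_pos[of k] by (intro divide_right_mono) (auto intro: mult_left_le_one_le)
    show ?thesis using h0 h1 h2 h3 h4 by linarith
  qed
  define bh where "bh = (\<lambda>k. min (kv * alpha k) (1 / kgc\<^sup>2))"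
  have bh_pos: "bh k > 0" for k unfolding bh_def using kv_pos alpha_pos[of k] kpos by auto
  have bh_le1: "bh k \<le> kv * alpha k" for k unfolding bh_def by auto
  have bh_le2: "bh k * kgc\<^sup>2 \<le> 1" for k
  proof -
    have "bh k * kgc\<^sup>2 \<le> (1 / kgc\<^sup>2) * kgc\<^sup>2" unfolding bh_def by (intro mult_right_mono) auto
    then show ?thesis using kpos by simp
  qed
  have cauchy: "(norm (c (x k) + J (x k) *v v k))\<^sup>2 \<le> (norm (c (x k)))\<^sup>2 - bh k * (norm (a k))\<^sup>2"
    if anz: "a k \<noteq> 0" for k
  proof -
    let ?c = "c (x k)" and ?J = "J (x k)" and ?a = "a k" and ?b = "bh k"
    obtain betac where bmin: "(1/2) * (norm (?c - betac *\<^sub>R (?J *v ?a)))\<^sup>2 \<le> (1/2) * (norm (?c - ?b *\<^sub>R (?J *v ?a)))\<^sup>2"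
      and bv: "norm (?c + ?J *v v k) \<le> norm (?c + ?J *v (- (betac *\<^sub>R ?a)))"
    proof -
      from anz step1[of k] obtain betac where "0 \<le> betac \<and> betac \<le> kv * alpha k
           \<and> (\<forall>beta. 0 \<le> beta \<and> beta \<le> kv * alpha k \<longrightarrow>
                (1/2) * (norm (?c - betac *\<^sub>R (?J *v ?a)))\<^sup>2
                \<le> (1/2) * (norm (?c - beta *\<^sub>R (?J *v ?a)))\<^sup>2)
           \<and> norm (?c + ?J *v v k) \<le> norm (?c + ?J *v (- (betac *\<^sub>R ?a)))"
        unfolding a_def by blast
      then show ?thesis using that bh_pos[of k] bh_le1[of k] by (meson less_imp_le)
    qed
    have neg: "?J *v (- w) = - (?J *v w)" for w
      by (simp add: matrix_vector_mult_def vec_eq_iff sum_negf)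
    have e1: "?J *v (- (betac *\<^sub>R ?a)) = - (betac *\<^sub>R (?J *v ?a))"
      by (simp add: neg matrix_vector_mult_scaleR)
    have ca: "?c \<bullet> (?J *v ?a) = (norm ?a)\<^sup>2"
      by (simp add: a_def transp_inner[symmetric] power2_norm_eq_inner)
    have Ja: "norm (?J *v ?a) \<le> kgc * norm ?a"
      using mv_bound[of ?J ?a] Jb[of k] by (meson mult_right_mono norm_ge_zero order_trans)
    have Ja2: "(norm (?J *v ?a))\<^sup>2 \<le> kgc\<^sup>2 * (norm ?a)\<^sup>2"
      using power_mono[OF Ja norm_ge_zero, of 2] by (simp add: power_mult_distrib)
    have exp: "(norm (?c - t *\<^sub>R y))\<^sup>2 = (norm ?c)\<^sup>2 - 2 * t * (?c \<bullet> y) + t\<^sup>2 * (norm y)\<^sup>2" for t y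
    proof -
      have "(norm (?c - t *\<^sub>R y))\<^sup>2 = (?c - t *\<^sub>R y) \<bullet> (?c - t *\<^sub>R y)" by (simp only: power2_norm_eq_inner)
      also have "\<dots> = ?c \<bullet> ?c - 2 * t * (?c \<bullet> y) + t\<^sup>2 * (y \<bullet> y)"
        by (simp add: inner_diff_left inner_diff_right inner_commute[of y ?c] power2_eq_square right_diff_distrib)
      finally show ?thesis by (simp only: power2_norm_eq_inner)
    qed
    have "(norm (?c - ?b *\<^sub>R (?J *v ?a)))\<^sup>2 = (norm ?c)\<^sup>2 - 2 * ?b * (?c \<bullet> (?J *v ?a)) + ?b\<^sup>2 * (norm (?J *v ?a))\<^sup>2"
      by (rule exp)
    also have "\<dots> \<le> (norm ?c)\<^sup>2 - 2 * ?b * (norm ?a)\<^sup>2 + ?b\<^sup>2 * (kgc\<^sup>2 * (norm ?a)\<^sup>2)"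
      using ca Ja2 by (simp add: mult_left_mono)
    also have "?b\<^sup>2 * (kgc\<^sup>2 * (norm ?a)\<^sup>2) \<le> ?b * (norm ?a)\<^sup>2"
    proof -
      have "?b\<^sup>2 * (kgc\<^sup>2 * (norm ?a)\<^sup>2) = ?b * (?b * kgc\<^sup>2) * (norm ?a)\<^sup>2" by (simp add: power2_eq_square)
      also have "\<dots> \<le> ?b * 1 * (norm ?a)\<^sup>2" using bh_le2[of k] bh_pos[of k]
        by (intro mult_right_mono mult_left_mono) auto
      finally show ?thesis by simp
    qed
    finally have "(norm (?c - ?b *\<^sub>R (?J *v ?a)))\<^sup>2 \<le> (norm ?c)\<^sup>2 - ?b * (norm ?a)\<^sup>2" by simp
    moreover have "norm (?c + ?J *v v k) \<le> norm (?c - betac *\<^sub>R (?J *v ?a))"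
      using bv e1 by simp
    moreover have "norm (?c - betac *\<^sub>R (?J *v ?a)) \<le> norm (?c - ?b *\<^sub>R (?J *v ?a))"
      using bmin by (intro power2_le_imp_le[OF _ norm_ge_zero]) simp
    ultimately have "norm (?c + ?J *v v k) \<le> norm (?c - ?b *\<^sub>R (?J *v ?a))" by linarith
    then have "(norm (?c + ?J *v v k))\<^sup>2 \<le> (norm (?c - ?b *\<^sub>R (?J *v ?a)))\<^sup>2"
      by (intro power_mono) auto
    with \<open>(norm (?c - ?b *\<^sub>R (?J *v ?a)))\<^sup>2 \<le> (norm ?c)\<^sup>2 - ?b * (norm ?a)\<^sup>2\<close> show ?thesis by linarith
  qed
  have cdec0: "0 \<le> norm (c (x k)) - norm (c (x k) + J (x k) *v v k)" for k
  proof (cases "a k = 0")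
    case True then show ?thesis using v0 by simp
  next
    case False
    have "(norm (c (x k) + J (x k) *v v k))\<^sup>2 \<le> (norm (c (x k)))\<^sup>2"
      using cauchy[OF False] bh_pos[of k] by (smt (verit) mult_nonneg_nonneg zero_le_power2 less_imp_le)
    then show ?thesis using power2_le_imp_le by force
  qed
  have cdec: "bh k * (norm (a k))\<^sup>2 / (2 * norm (c (x k))) \<le> norm (c (x k)) - norm (c (x k) + J (x k) *v v k)"
    if anz: "a k \<noteq> 0" for k
  proof -
    define nc where "nc = norm (c (x k))"
    define n1 where "n1 = norm (c (x k) + J (x k) *v v k)"
    have ncp: "nc > 0" using anz a0c unfolding nc_def by auto
    have n1p: "n1 \<ge> 0" unfolding n1_def by simp
    have d0: "nc - n1 \<ge> 0" using cdec0[of k] unfolding nc_def n1_def by simp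
    have "n1\<^sup>2 \<le> nc\<^sup>2 - bh k * (norm (a k))\<^sup>2" using cauchy[OF anz] unfolding nc_def n1_def .
    then have "bh k * (norm (a k))\<^sup>2 \<le> (nc - n1) * (nc + n1)" by (simp add: power2_eq_square algebra_simps)
    also have "\<dots> \<le> (nc - n1) * (2 * nc)" using d0 n1p d0 by (intro mult_left_mono) auto
    finally show ?thesis using ncp unfolding nc_def[symmetric] n1_def[symmetric]
      by (simp add: pos_divide_le_eq mult.commute)
  qed
  have cdec2: "bh k * sigmin\<^sup>2 * norm (c (x k)) / 2 \<le> norm (c (x k)) - norm (c (x k) + J (x k) *v v k)"
    if anz: "a k \<noteq> 0" for k
  proof -
    have ncp: "norm (c (x k)) > 0" using anz a0c by auto
    have "sigmin\<^sup>2 * (norm (c (x k)))\<^sup>2 \<le> (norm (a k))\<^sup>2"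
      using power_mono[OF al[of k], of 2] sigmin_pos by (simp add: power_mult_distrib)
    then have "bh k * (sigmin\<^sup>2 * (norm (c (x k)))\<^sup>2) / (2 * norm (c (x k))) \<le> bh k * (norm (a k))\<^sup>2 / (2 * norm (c (x k)))"
      using bh_pos[of k] ncp by (intro divide_right_mono mult_left_mono) auto
    moreover have "bh k * (sigmin\<^sup>2 * (norm (c (x k)))\<^sup>2) / (2 * norm (c (x k))) = bh k * sigmin\<^sup>2 * norm (c (x k)) / 2"
      using ncp by (simp add: power2_eq_square field_simps)
    ultimately show ?thesis using cdec[OF anz] by linarith
  qed
  have tmt_pos: "taumintrial > 0" unfolding taumintrial_def
    using sigc K_pos kv_pos sigmin_pos kpos alpha0_pos by auto
  define num where "num = (\<lambda>k. (1 - sigc) * (norm (c (x k)) - norm (c (x k) + J (x k) *v v k)))"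
  have num0: "num k \<ge> 0" for k unfolding num_def using sigc cdec0[of k] by simp
  have trial: "num k / D k \<ge> taumintrial" if Dp: "D k > 0" for k
  proof -
    have anz: "a k \<noteq> 0"
    proof
      assume "a k = 0"
      then have "v k = 0" by (rule v0)
      then show False using Dle[of k] Dp by simp
    qed
    define nc where "nc = norm (c (x k))"
    define na where "na = norm (a k)"
    have ncp: "nc > 0" using anz a0c unfolding nc_def by auto
    have nap: "na > 0" using anz unfolding na_def by auto
    have al': "sigmin * nc \<le> na" using al[of k] unfolding nc_def na_def .
    have ak: "alpha k > 0" using alpha_pos .
    define ub where "ub = alpha k * na * K / (2 * kgc)"
    have Dub: "D k \<le> ub"
    proof -
      have vv: "norm (v k) \<le> kv * alpha k * na" using vb[of k] unfolding na_def .
      have t1: "(kgf + kdr) * norm (v k) \<le> (kgf + kdr) * (kv * alpha k * na)"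
        using vv kpos by (intro mult_left_mono) auto
      have "(norm (v k))\<^sup>2 \<le> (kv * alpha k * na)\<^sup>2" using vv by (intro power_mono) auto
      then have t2: "sigbar * (norm (v k))\<^sup>2 / alpha k \<le> sigbar * (kv * alpha k * na)\<^sup>2 / alpha k"
        using sigbar_le ak by (intro divide_right_mono mult_left_mono) auto
      have t3: "sigbar * (kv * alpha k * na)\<^sup>2 / alpha k = (kv * alpha k * na) * (sigbar * kv * na)"
        using ak by (simp add: power2_eq_square field_simps)
      have nak: "na \<le> kgc * kc" using ab[of k] cb[of k] kpos unfolding na_def
        by (meson mult_left_mono order_trans less_imp_le)
      have t4: "sigbar * kv * na \<le> sigbar * kc * kv * kgc"
      proof -
        have "sigbar * kv * na \<le> sigbar * kv * (kgc * kc)"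
          using nak sigbar_le kv_pos by (intro mult_left_mono) auto
        then show ?thesis by (simp add: algebra_simps)
      qed
      have "D k \<le> (kv * alpha k * na) * (kgf + kdr) + (kv * alpha k * na) * (sigbar * kv * na)"
        using Dle[of k] t1 t2 t3 by (simp add: algebra_simps)
      also have "\<dots> = (kv * alpha k * na) * (kgf + kdr + sigbar * kv * na)" by (simp add: algebra_simps)
      also have "\<dots> \<le> (kv * alpha k * na) * (kgf + kdr + sigbar * kc * kv * kgc)"
        using t4 kv_pos ak nap by (intro mult_left_mono) auto
      also have "\<dots> = ub" unfolding ub_def K_def using kpos by (simp add: field_simps)
      finally show ?thesis .
    qed
    define Q where "Q = (1 - sigc) * bh k * sigmin * kgc / (alpha k * K)"
    have Q0: "Q \<ge> 0" unfolding Q_def using sigc bh_pos[of k] sigmin_pos kpos ak K_pos by auto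
    have Qub: "Q * ub = (1 - sigc) * bh k * sigmin * na / 2"
      unfolding Q_def ub_def using ak K_pos kpos by (simp add: field_simps)
    have numlb: "(1 - sigc) * bh k * sigmin * na / 2 \<le> num k"
    proof -
      have "bh k * sigmin * na / 2 = (bh k * na / (2 * nc)) * (sigmin * nc)" using ncp by (simp add: field_simps)
      also have "\<dots> \<le> (bh k * na / (2 * nc)) * na" by (intro mult_left_mono al') (use bh_pos[of k] ncp nap in simp)
      also have "\<dots> = bh k * na\<^sup>2 / (2 * nc)" by (simp add: power2_eq_square)
      also have "\<dots> \<le> norm (c (x k)) - norm (c (x k) + J (x k) *v v k)" using cdec[OF anz] unfolding na_def nc_def .
      finally have "bh k * sigmin * na / 2 \<le> norm (c (x k)) - norm (c (x k) + J (x k) *v v k)" .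
      then have "(1 - sigc) * (bh k * sigmin * na / 2) \<le> num k" unfolding num_def using sigc by (intro mult_left_mono) auto
      then show ?thesis by simp
    qed
    have "Q * D k \<le> Q * ub" using Q0 Dub by (intro mult_left_mono)
    then have "Q \<le> num k / D k" using Qub numlb Dp by (simp add: pos_le_divide_eq)
    moreover have "taumintrial \<le> Q"
    proof (cases "kv * alpha k \<le> 1 / kgc\<^sup>2")
      case True
      then have "bh k = kv * alpha k" unfolding bh_def by simp
      then have "Q = (1 - sigc) * kv * sigmin * kgc / K" unfolding Q_def using ak K_pos by (simp add: field_simps)
      also have "\<dots> \<ge> (1 - sigc) * kv * sigmin\<^sup>2 / K"
        using sig_le sigc kv_pos sigmin_pos K_pos by (intro divide_right_mono mult_left_mono) (auto simp: power2_eq_square)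
      finally show ?thesis unfolding taumintrial_def by simp
    next
      case False
      then have "bh k = 1 / kgc\<^sup>2" unfolding bh_def by simp
      then have "Q = (1 - sigc) * (1 / kgc\<^sup>2) * sigmin * kgc / (alpha k * K)" unfolding Q_def by simp
      also have "\<dots> = (1 - sigc) * (sigmin / kgc) / (alpha k * K)" using kpos ak K_pos by (simp add: field_simps power2_eq_square)
      also have "\<dots> \<ge> (1 - sigc) * (sigmin / kgc)\<^sup>2 / (K * alpha 0)"
      proof -
        have r1: "sigmin / kgc \<le> 1" using sig_le kpos by simp
        have q0: "0 \<le> sigmin / kgc" using sigmin_pos kpos by simp
        have "(sigmin / kgc)\<^sup>2 \<le> sigmin / kgc"
          using mult_left_le_one_le[OF q0 q0 r1] by (simp only: power2_eq_square)
        then have "(1 - sigc) * (sigmin / kgc)\<^sup>2 \<le> (1 - sigc) * (sigmin / kgc)" using sigc by (intro mult_left_mono) auto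
        moreover have "alpha k * K \<le> K * alpha 0" using alpha_le0[of k] K_pos by (simp add: mult.commute)
        ultimately show ?thesis using ak K_pos sigc sigmin_pos kpos
          by (intro frac_le) auto
      qed
      finally show ?thesis unfolding taumintrial_def by simp
    qed
    ultimately show ?thesis by simp
  qed
  have tau_eq: "tau k = (if D k \<le> 0 then taup k else if taup k \<le> num k / D k then taup k
      else min ((1 - epstau) * taup k) (num k / D k))" for k
    using tau_upd[of k] unfolding num_def Let_def .
  have tau_ge_pre: "tau k \<ge> min (taup k) ((1 - epstau) * taumintrial)" for k
  proof (cases "D k \<le> 0")
    case True then show ?thesis using tau_eq[of k] by simp
  next
    case False
    then have t: "num k / D k \<ge> taumintrial" using trial by simp
    show ?thesis
    proof (cases "taup k \<le> num k / D k")
      case True then show ?thesis using tau_eq[of k] False by simp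
    next
      case F2: False
      have "(1 - epstau) * taumintrial \<le> (1 - epstau) * taup k" using t F2 epstau by (intro mult_left_mono) auto
      moreover have "(1 - epstau) * taumintrial \<le> num k / D k" using t epstau tmt_pos
        by (smt (verit) mult_left_le_one_le)
      ultimately show ?thesis using tau_eq[of k] False F2 by simp
    qed
  qed
  have tau_le_pre: "tau k \<le> taup k" if "taup k > 0" for k
    using tau_eq[of k] that epstau by (auto simp: min_def)
  have tau_le_t: "tau k \<le> num k / D k" if "D k > 0" for k
    using tau_eq[of k] that by (auto simp: min_def)
  have tau_ge: "tau k \<ge> taumin" for k
  proof (induction k)
    case 0 then show ?case unfolding taumin_def by simp
  next
    case (Suc k)
    have "tau (Suc k) \<ge> min (tau k) ((1 - epstau) * taumintrial)" using tau_ge_pre[of "Suc k"] unfolding taup_def by simp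
    then show ?case using Suc unfolding taumin_def by linarith
  qed
  have taumin_pos: "taumin > 0"
  proof -
    have "tau 0 \<ge> min taum1 ((1 - epstau) * taumintrial)" using tau_ge_pre[of 0] unfolding taup_def by simp
    moreover have "(1 - epstau) * taumintrial > 0" using epstau tmt_pos by simp
    ultimately have "tau 0 > 0" using taum1_pos by linarith
    then show ?thesis unfolding taumin_def using epstau tmt_pos by simp
  qed
  have tau_pos: "tau k > 0" for k using tau_ge[of k] taumin_pos by linarith
  have tau_mono: "tau (Suc k) \<le> tau k" for k using tau_le_pre[of "Suc k"] tau_pos[of k] unfolding taup_def by simp
  have tauD: "tau k * D k \<le> num k" for k
  proof (cases "D k \<le> 0")
    case True then show ?thesis using tau_pos[of k] num0[of k] by (smt (verit) mult_nonneg_nonpos)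
  next
    case False
    then have "tau k * D k \<le> (num k / D k) * D k" using tau_le_t[of k] by (intro mult_right_mono) auto
    then show ?thesis using False by simp
  qed
  have dq_lb: "dq k (s k) (tau k) \<ge> tau k * sigu * (norm (s k))\<^sup>2 / alpha k
      + sigc * (norm (c (x k)) - norm (c (x k) + J (x k) *v v k))" for k
  proof (rule dq_arith[OF alpha_pos])
    show "dq k (s k) (tau k) = - tau k * (g (x k) \<bullet> s k + 1 / (2 * alpha k) * (norm (s k))\<^sup>2 + r (x k + s k) - r (x k))
      + norm (c (x k)) - norm (c (x k) + J (x k) *v v k)"
      unfolding dq_def using Js[of k] by simp
    show "D k = g (x k) \<bullet> s k + (sigu + 1/2) * (norm (s k))\<^sup>2 / alpha k + r (x k + s k) - r (x k)"
      unfolding D_def sigbar_def by simp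
    show "tau k * D k \<le> (1 - sigc) * (norm (c (x k)) - norm (c (x k) + J (x k) *v v k))"
      using tauD[of k] unfolding num_def .
  qed
  have dq_nonneg: "dq k (s k) (tau k) \<ge> 0" for k
  proof -
    have "tau k * sigu * (norm (s k))\<^sup>2 / alpha k \<ge> 0" using tau_pos[of k] sigu alpha_pos[of k] by simp
    moreover have "sigc * (norm (c (x k)) - norm (c (x k) + J (x k) *v v k)) \<ge> 0" using sigc cdec0[of k] by simp
    ultimately show ?thesis using dq_lb[of k] by linarith
  qed
  define T where "T = taumin / (taumin * Lg + LJ)"
  have T_pos: "T > 0" unfolding T_def using taumin_pos kpos by (simp add: add_pos_pos)
  have succ_T: "k \<in> S" if aT: "alpha k \<le> T" for k
  proof -
    have fd: "f (x k + s k) \<le> f (x k) + g (x k) \<bullet> s k + Lg / 2 * (norm (s k))\<^sup>2"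
      by (rule descent_f[OF f_deriv X_convex x_in_X trial_in_X g_lip])
    have cd: "norm (c (x k + s k)) \<le> norm (c (x k) + J (x k) *v s k) + LJ / 2 * (norm (s k))\<^sup>2"
    proof -
      have "norm (c (x k + s k) - c (x k) - J (x k) *v s k) \<le> LJ / 2 * (norm (s k))\<^sup>2"
        using descent_c[OF c_deriv X_convex x_in_X[of k] trial_in_X[of k] J_lip] kpos by simp
      moreover have "norm (c (x k + s k)) \<le> norm (c (x k) + J (x k) *v s k) + norm (c (x k + s k) - c (x k) - J (x k) *v s k)"
        using norm_triangle_ineq[of "c (x k) + J (x k) *v s k" "c (x k + s k) - c (x k) - J (x k) *v s k"] by simp
      ultimately show ?thesis by linarith
    qed
    have tp: "taumin * Lg + LJ > 0" using taumin_pos kpos by (simp add: add_pos_pos)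
    have h1: "alpha k * (taumin * Lg + LJ) \<le> taumin" using aT tp unfolding T_def by (simp add: pos_le_divide_eq)
    have h2: "alpha k * Lg \<le> 1"
    proof -
      have "taumin * (alpha k * Lg) \<le> alpha k * (taumin * Lg + LJ)" using alpha_pos[of k] kpos by (simp add: algebra_simps)
      then have "taumin * (alpha k * Lg) \<le> taumin * 1" using h1 by simp
      then show ?thesis using taumin_pos by (simp only: mult_le_cancel_left_pos)
    qed
    have key: "alpha k * (tau k * Lg + LJ) \<le> tau k"
    proof -
      have "alpha k * LJ \<le> taumin * (1 - alpha k * Lg)" using h1 by (simp add: algebra_simps)
      also have "\<dots> \<le> tau k * (1 - alpha k * Lg)" using tau_ge[of k] h2 by (intro mult_right_mono) auto
      finally show ?thesis by (simp add: algebra_simps)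
    qed
    have "tau k * (f (x k + s k) + r (x k + s k)) + norm (c (x k + s k))
        \<le> tau k * (f (x k) + r (x k)) + norm (c (x k)) - eta * dq k (s k) (tau k)"
    proof (rule succ_arith[OF tau_pos alpha_pos eta(2) dq_nonneg fd cd key zero_le_power2])
      show "dq k (s k) (tau k) = - tau k * (g (x k) \<bullet> s k + 1 / (2 * alpha k) * (norm (s k))\<^sup>2 + r (x k + s k) - r (x k))
        + norm (c (x k)) - norm (c (x k) + J (x k) *v s k)" unfolding dq_def by simp
    qed
    then show ?thesis unfolding S_def merit_def by simp
  qed
  have alpha_ge: "alpha k \<ge> alphamin" for k
  proof (induction k)
    case 0 then show ?case unfolding alphamin_def by simp
  next
    case (Suc k)
    show ?case
    proof (cases "k \<in> S")
      case True then show ?thesis using succ[of k] Suc by simp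
    next
      case False
      then have "alpha k > T" using succ_T by force
      then have "xi * alpha k \<ge> xi * T" using xi by simp
      moreover have "alphamin \<le> xi * T" unfolding alphamin_def T_def by simp
      ultimately show ?thesis using unsucc[OF False] by simp
    qed
  qed
  have alphamin_pos: "alphamin > 0"
  proof -
    have "xi * T > 0" using xi T_pos by simp
    then show ?thesis unfolding alphamin_def using alpha0_pos unfolding T_def by (simp add: mult.assoc)
  qed
  have chi_eq: "chi k = max (norm (u k) / alpha k) (norm (c (x k)))" for k
  proof -
    have e: "(g (x k) + gr k - transpose (J (x k)) *v y k) + (1 / alpha k) *\<^sub>R u k = 0"
      using kkt[of k] by (simp add: algebra_simps)
    then have "g (x k) + gr k - transpose (J (x k)) *v y k = - ((1 / alpha k) *\<^sub>R u k)"
      by (simp add: eq_neg_iff_add_eq_0)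
    then show ?thesis unfolding chi_def using alpha_pos[of k] by simp
  qed
  define m1 where "m1 = sigu * taumin * alphamin"
  define m2 where "m2 = sigc * sigmin\<^sup>2 / (2 * kc * (1 + kgc\<^sup>2))"
  define m3 where "m3 = sigc * sigmin\<^sup>2 * kv * alphamin / (2 * kc)"
  have m1p: "m1 > 0" unfolding m1_def using sigu taumin_pos alphamin_pos by simp
  have m2p: "m2 > 0" unfolding m2_def using sigc sigmin_pos kpos by (simp add: add_pos_pos)
  have m3p: "m3 > 0" unfolding m3_def using sigc sigmin_pos kpos kv_pos alphamin_pos by simp
  have kPhi_eq: "kPhi = eta * min m1 (min m2 m3)" unfolding kPhi_def m1_def m2_def m3_def ..
  have T1: "tau k * sigu * (norm (s k))\<^sup>2 / alpha k \<ge> m1 * (norm (u k) / alpha k)\<^sup>2" for k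
  proof -
    have ak: "alpha k > 0" using alpha_pos .
    have "m1 * (norm (u k) / alpha k)\<^sup>2 = (sigu * taumin * (norm (u k))\<^sup>2 / alpha k) * (alphamin / alpha k)"
      unfolding m1_def using ak by (simp add: field_simps power2_eq_square)
    also have "\<dots> \<le> sigu * taumin * (norm (u k))\<^sup>2 / alpha k"
      using alpha_ge[of k] ak alphamin_pos sigu taumin_pos by (intro mult_right_le_one_le) auto
    also have "\<dots> \<le> tau k * sigu * (norm (s k))\<^sup>2 / alpha k"
    proof -
      have "sigu * taumin * (norm (u k))\<^sup>2 \<le> sigu * tau k * (norm (s k))\<^sup>2"
        using ns[of k] tau_ge[of k] sigu taumin_pos by (intro mult_mono mult_left_mono) auto
      then show ?thesis using ak by (simp add: divide_right_mono mult.commute mult.left_commute)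
    qed
    finally show ?thesis .
  qed
  have T2: "sigc * (norm (c (x k)) - norm (c (x k) + J (x k) *v v k)) \<ge> min m2 m3 * (norm (c (x k)))\<^sup>2" for k
  proof (cases "a k = 0")
    case True
    then have "c (x k) = 0" using a0c by simp
    then show ?thesis using v0[OF True] by simp
  next
    case False
    define nc where "nc = norm (c (x k))"
    have nc0: "nc \<ge> 0" "nc \<le> kc" unfolding nc_def using cb[of k] by auto
    have ak: "alpha k > 0" using alpha_pos .
    have base: "sigc * (bh k * sigmin\<^sup>2 * nc / 2) \<le> sigc * (norm (c (x k)) - norm (c (x k) + J (x k) *v v k))"
      using cdec2[OF False] sigc unfolding nc_def by (intro mult_left_mono) auto
    have "min m2 m3 * nc\<^sup>2 \<le> sigc * (bh k * sigmin\<^sup>2 * nc / 2)"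
    proof (cases "kv * alpha k \<le> 1 / kgc\<^sup>2")
      case True
      then have "bh k = kv * alpha k" unfolding bh_def by simp
      have "m3 * nc\<^sup>2 = (sigc * sigmin\<^sup>2 * kv * nc / 2) * (alphamin * (nc / kc))"
        unfolding m3_def using kpos by (simp add: field_simps power2_eq_square)
      also have "\<dots> \<le> (sigc * sigmin\<^sup>2 * kv * nc / 2) * (alpha k * 1)"
        using alpha_ge[of k] alphamin_pos nc0 kpos sigc kv_pos
        by (intro mult_left_mono mult_mono) (auto simp: divide_le_eq_1)
      also have "\<dots> = sigc * (bh k * sigmin\<^sup>2 * nc / 2)" using \<open>bh k = kv * alpha k\<close> by simp
      finally show ?thesis using m2p m3p nc0
        by (meson min.cobounded2 mult_right_mono order_trans zero_le_power2)
    next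
      case False
      then have "bh k = 1 / kgc\<^sup>2" unfolding bh_def by simp
      have "m2 * nc\<^sup>2 = (sigc * sigmin\<^sup>2 * nc / 2) * ((nc / kc) * (1 / (1 + kgc\<^sup>2)))"
        unfolding m2_def using kpos by (simp add: field_simps power2_eq_square)
      also have "\<dots> \<le> (sigc * sigmin\<^sup>2 * nc / 2) * (1 * (1 / kgc\<^sup>2))"
        using nc0 kpos sigc mult_pos_pos[OF add_pos_nonneg[OF zero_less_one zero_le_power2[of kgc]] zero_less_power[OF kpos(3), of 2]]
        by (intro mult_left_mono mult_mono divide_left_mono) (auto simp: divide_le_eq_1)
      also have "\<dots> = sigc * (bh k * sigmin\<^sup>2 * nc / 2)" using \<open>bh k = 1 / kgc\<^sup>2\<close> by simp
      finally show ?thesis using m2p m3p nc0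
        by (meson min.cobounded1 mult_right_mono order_trans zero_le_power2)
    qed
    then show ?thesis using base unfolding nc_def by linarith
  qed
  have dq_chi: "dq k (s k) (tau k) \<ge> (kPhi / eta) * (chi k)\<^sup>2" for k
  proof -
    define A where "A = norm (u k) / alpha k"
    define C where "C = norm (c (x k))"
    define mm where "mm = min m1 (min m2 m3)"
    have A0: "A \<ge> 0" unfolding A_def using alpha_pos[of k] by simp
    have C0: "C \<ge> 0" unfolding C_def by simp
    have mm0: "mm > 0" unfolding mm_def using m1p m2p m3p by simp
    have kk: "kPhi / eta = mm" unfolding kPhi_eq mm_def using eta by simp
    have "(chi k)\<^sup>2 \<le> A\<^sup>2 + C\<^sup>2" unfolding chi_eq A_def[symmetric] C_def[symmetric]
      using A0 C0 by (simp add: max_def)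
    then have "mm * (chi k)\<^sup>2 \<le> mm * A\<^sup>2 + mm * C\<^sup>2" using mm0 by (simp add: mult_left_mono distrib_left[symmetric])
    also have "\<dots> \<le> m1 * A\<^sup>2 + min m2 m3 * C\<^sup>2"
      unfolding mm_def by (intro add_mono mult_right_mono) auto
    also have "\<dots> \<le> dq k (s k) (tau k)" using T1[of k] T2[of k] dq_lb[of k] unfolding A_def C_def by linarith
    finally show ?thesis using kk by simp
  qed
  have kPhi_pos: "kPhi > 0" unfolding kPhi_eq using eta m1p m2p m3p by simp
  have eps2: "eps\<^sup>2 > 0" using eps_pos by simp
  define M where "M = (\<lambda>k. tau k * (f (x k) - finf + r (x k)) + norm (c (x k)))"
  have M_nonneg: "M k \<ge> 0" for k
  proof -
    have "f (x k) - finf + r (x k) \<ge> 0" using f_lb[OF x_in_X] r_nonneg[of "x k"] by simp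
    then show ?thesis unfolding M_def using tau_pos[of k] by simp
  qed
  have M_step: "M (Suc k) \<le> M k - (if k \<in> S then eta * dq k (s k) (tau k) else 0)" for k
  proof (cases "k \<in> S")
    case True
    have xs: "x (Suc k) = x k + s k" using succ[OF True] by simp
    have F1: "f (x k + s k) - finf + r (x k + s k) \<ge> 0" using f_lb[OF trial_in_X] r_nonneg[of "x k + s k"] by simp
    have "M (Suc k) \<le> tau k * (f (x k + s k) - finf + r (x k + s k)) + norm (c (x k + s k))"
      unfolding M_def xs using tau_mono[of k] F1 by (simp add: mult_right_mono)
    also have "\<dots> = merit f r c (tau k) (x k + s k) - tau k * finf" unfolding merit_def by (simp add: algebra_simps)
    also have "\<dots> \<le> merit f r c (tau k) (x k) - eta * dq k (s k) (tau k) - tau k * finf"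
      using True unfolding S_def by simp
    also have "\<dots> = M k - eta * dq k (s k) (tau k)" unfolding merit_def M_def by (simp add: algebra_simps)
    finally show ?thesis using True by simp
  next
    case False
    have xs: "x (Suc k) = x k" using unsucc[OF False] by simp
    have F1: "f (x k) - finf + r (x k) \<ge> 0" using f_lb[OF x_in_X] r_nonneg[of "x k"] by simp
    show ?thesis unfolding M_def xs using tau_mono[of k] F1 False by (simp add: mult_right_mono)
  qed
  have M_dec: "M (Suc k) \<le> M k" for k
  proof -
    have "eta * dq k (s k) (tau k) \<ge> 0" using eta dq_nonneg[of k] by simp
    then show ?thesis using M_step[of k] by (cases "k \<in> S") auto
  qed
  have M_le0: "M k \<le> M 0" for k
    by (induction k) (use M_dec order_trans in auto)
  have drop: "eta * dq k (s k) (tau k) \<ge> kPhi * eps\<^sup>2" if "chi k > eps" for k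
  proof -
    have "eps\<^sup>2 \<le> (chi k)\<^sup>2" using that eps_pos by (intro power_mono) auto
    then have "kPhi * eps\<^sup>2 \<le> kPhi * (chi k)\<^sup>2" using kPhi_pos by simp
    also have "\<dots> = eta * ((kPhi / eta) * (chi k)\<^sup>2)" using eta by simp
    also have "\<dots> \<le> eta * dq k (s k) (tau k)" using dq_chi[of k] eta by (intro mult_left_mono) auto
    finally show ?thesis .
  qed
  have M_run: "M (k1 + d) \<le> M k1 - real d * (kPhi * eps\<^sup>2)"
    if "\<forall>k. k1 \<le> k \<and> k < k1 + d \<longrightarrow> k \<in> S \<and> chi k > eps" for k1 d
    using that
  proof (induction d)
    case 0 then show ?case by simp
  next
    case (Suc d)
    have ih: "M (k1 + d) \<le> M k1 - real d * (kPhi * eps\<^sup>2)" using Suc by auto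
    have "k1 + d \<in> S \<and> chi (k1 + d) > eps" using Suc.prems by auto
    then have "M (Suc (k1 + d)) \<le> M (k1 + d) - kPhi * eps\<^sup>2" using M_step[of "k1 + d"] drop[of "k1 + d"] by auto
    then show ?case using ih by (simp add: algebra_simps)
  qed
  have N_eq: "M 0 = tau 0 * (f (x 0) - finf + r (x 0)) + norm (c (x 0))" unfolding M_def by simp
  have claim1: "\<forall>k1 k2. k1 < k2 \<and> (\<forall>k. k1 \<le> k \<and> k < k2 \<longrightarrow> k \<in> S \<and> chi k > eps)
            \<longrightarrow> int (k2 - k1) \<le> B"
  proof (intro allI impI)
    fix k1 k2 assume h: "k1 < k2 \<and> (\<forall>k. k1 \<le> k \<and> k < k2 \<longrightarrow> k \<in> S \<and> chi k > eps)"
    define d where "d = k2 - k1"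
    have k2: "k2 = k1 + d" using h unfolding d_def by simp
    have "M (k1 + d) \<le> M k1 - real d * (kPhi * eps\<^sup>2)" using h k2 by (intro M_run) auto
    then have "real d * (kPhi * eps\<^sup>2) \<le> M 0" using M_nonneg[of "k1 + d"] M_le0[of k1] by linarith
    then have "real d \<le> M 0 / (kPhi * eps\<^sup>2)" using kPhi_pos eps2 by (simp add: pos_le_divide_eq)
    then show "int (k2 - k1) \<le> B" unfolding B_def N_eq[symmetric] d_def[symmetric] by (simp add: le_floor_iff)
  qed
  define Fc where "Fc = (\<lambda>k. (\<Sum>i<k. if i \<in> S then 0 else 1::nat))"
  define Sc where "Sc = (\<lambda>k. (\<Sum>i<k. if i \<in> S then 1 else 0::nat))"
  have FS: "Fc k + Sc k = k" for k
    by (induction k) (auto simp: Fc_def Sc_def)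
  have alpha_F: "alpha k = alpha 0 * xi ^ Fc k" for k
  proof (induction k)
    case 0 then show ?case by (simp add: Fc_def)
  next
    case (Suc k)
    then show ?case using succ[of k] unsucc[of k] by (cases "k \<in> S") (auto simp: Fc_def)
  qed
  define L where "L = ln (taumin / (alpha 0 * (taumin * Lg + LJ))) / ln xi"
  define U where "U = max 0 \<lceil>L\<rceil>"
  have U0: "U \<ge> 0" unfolding U_def by simp
  have F_le: "int (Fc k) \<le> U" for k
  proof (induction k)
    case 0 then show ?case by (simp add: Fc_def U0)
  next
    case (Suc k)
    show ?case
    proof (cases "k \<in> S")
      case True then show ?thesis using Suc by (simp add: Fc_def)
    next
      case False
      have FS1: "Fc (Suc k) = Fc k + 1" using False by (simp add: Fc_def)
      have "alpha k > T" using False succ_T by force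
      then have gt: "xi ^ Fc k > T / alpha 0" using alpha_F[of k] alpha0_pos by (simp add: pos_divide_less_eq mult.commute)
      have Tp: "T / alpha 0 > 0" using T_pos alpha0_pos by simp
      have "ln (T / alpha 0) < ln (xi ^ Fc k)" using gt Tp by simp
      also have "\<dots> = real (Fc k) * ln xi" using xi by (simp add: ln_realpow)
      finally have "real (Fc k) < ln (T / alpha 0) / ln xi" using xi by (simp add: neg_less_divide_eq)
      moreover have "T / alpha 0 = taumin / (alpha 0 * (taumin * Lg + LJ))" unfolding T_def by (simp add: field_simps)
      ultimately have "real (Fc k) < L" unfolding L_def by simp
      then have "int (Fc k) < \<lceil>L\<rceil>" by (simp add: less_ceiling_iff)
      then show ?thesis unfolding FS1 U_def by simp
    qed
  qed
  have count_run: "M k \<le> M 0 - real (Sc k) * (kPhi * eps\<^sup>2)" if "\<forall>i<k. chi i > eps" for k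
    using that
  proof (induction k)
    case 0 then show ?case by (simp add: Sc_def)
  next
    case (Suc k)
    have ih: "M k \<le> M 0 - real (Sc k) * (kPhi * eps\<^sup>2)" using Suc by auto
    have ck: "chi k > eps" using Suc.prems by auto
    show ?case
    proof (cases "k \<in> S")
      case True
      then have "M (Suc k) \<le> M k - kPhi * eps\<^sup>2" using M_step[of k] drop[OF ck] by auto
      then show ?thesis using ih True by (simp add: Sc_def algebra_simps)
    next
      case False
      then show ?thesis using ih M_dec[of k] by (simp add: Sc_def)
    qed
  qed
  have B0: "B \<ge> 0" unfolding B_def N_eq[symmetric] using M_nonneg[of 0] kPhi_pos eps2 by simp
  have claim2: "\<exists>k. int k \<le> (max 0 \<lceil>ln (taumin / (alpha 0 * (taumin * Lg + LJ))) / ln xi\<rceil> + 1) * B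
              \<and> chi k \<le> eps"
  proof (cases "B = 0")
    case True
    have "M 0 / (kPhi * eps\<^sup>2) < 1" using True unfolding B_def N_eq[symmetric] by (simp add: floor_eq_iff)
    then have Nlt: "M 0 < kPhi * eps\<^sup>2" using kPhi_pos eps2 by (simp add: divide_less_eq)
    have kP1: "kPhi \<le> eta * m1" and kP2: "kPhi \<le> eta * m2" unfolding kPhi_eq using eta by auto
    define nc where "nc = norm (c (x 0))"
    define A where "A = f (x 0) - finf"
    have A0: "A \<ge> 0" unfolding A_def using f_lb[OF x_in_X] by simp
    have r00: "r (x 0) \<ge> 0" by (rule r_nonneg)
    have Meq: "M 0 = tau 0 * (A + r (x 0)) + nc" unfolding M_def A_def nc_def by simp
    have tA: "tau 0 * (A + r (x 0)) \<ge> 0" using tau_pos[of 0] A0 r00 by simp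
    have ncM: "nc \<le> M 0" using Meq tA by simp
    have nc0: "nc \<ge> 0" unfolding nc_def by simp
    have c_ok: "nc \<le> eps"
    proof (rule ccontr)
      assume "\<not> nc \<le> eps"
      then have gt: "eps < nc" by simp
      have m2kc: "m2 * kc \<le> 1 / 2"
      proof -
        have "sigmin\<^sup>2 \<le> kgc\<^sup>2" using sig_le sigmin_pos by (intro power_mono) auto
        then have "sigc * sigmin\<^sup>2 \<le> 1 * (1 + kgc\<^sup>2)" using sigc
          by (intro mult_mono) auto
        then have sc: "sigc * sigmin\<^sup>2 \<le> 1 + kgc\<^sup>2" by simp
        have pos: "1 + kgc\<^sup>2 > 0" by (simp add: add_pos_nonneg)
        have gen: "pp / (2 * kc * q) * kc = pp / (2 * q)" for pp q :: real
          using kpos(2) by (cases "q = 0") (simp_all add: field_simps)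
        have "m2 * kc = (sigc * sigmin\<^sup>2) / (2 * (1 + kgc\<^sup>2))" unfolding m2_def by (rule gen)
        also have "\<dots> \<le> (1 + kgc\<^sup>2) / (2 * (1 + kgc\<^sup>2))" using sc pos by (intro divide_right_mono) auto
        also have "\<dots> = 1 / 2" using pos by simp
        finally show ?thesis .
      qed
      have "kPhi * eps\<^sup>2 \<le> eta * m2 * eps\<^sup>2" using kP2 eps2 by (intro mult_right_mono) auto
      then have "nc < eta * m2 * eps\<^sup>2" using ncM Nlt by linarith
      also have "\<dots> \<le> m2 * eps\<^sup>2" using eta m2p eps2 by (simp add: mult_le_cancel_right1)
      also have "\<dots> \<le> m2 * eps * nc" using gt m2p eps_pos by (simp add: power2_eq_square)
      finally have "nc * 1 < nc * (m2 * eps)" by (simp add: algebra_simps)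
      then have "1 < m2 * eps" using gt eps_pos by (simp add: mult_less_cancel_left_pos)
      also have "\<dots> = (m2 * kc) * (eps / kc)" using kpos by simp
      also have "\<dots> \<le> (1/2) * (eps / kc)" using m2kc eps_pos kpos by (intro mult_right_mono) auto
      finally have "2 * kc < eps" using kpos by (simp add: field_simps)
      moreover have "nc \<le> kc" unfolding nc_def using cb[of 0] .
      ultimately show False using gt kpos by linarith
    qed
    have u_ok: "norm (u 0) / alpha 0 \<le> eps"
    proof (rule ccontr)
      assume "\<not> norm (u 0) / alpha 0 \<le> eps"
      then have agt: "eps < norm (u 0) / alpha 0" by simp
      define al where "al = alpha 0"
      define aa where "aa = norm (u 0) / al"
      define W where "W = kgf + kdr"
      define V where "V = norm (v 0)"
      define r1 where "r1 = r (x 0 + s 0)"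
      have alp: "al > 0" unfolding al_def using alpha0_pos .
      have agt': "eps < aa" using agt unfolding aa_def al_def .
      have up: "norm (u 0) > 0" using agt eps_pos alp unfolding al_def by (smt (verit) divide_nonpos_pos norm_ge_zero)
      have uaa: "norm (u 0) = al * aa" unfolding aa_def using alp by simp
      have W0: "W > 0" unfolding W_def using kpos by simp
      have V0: "V \<ge> 0" unfolding V_def by simp
      have r10: "r1 \<ge> 0" unfolding r1_def by (rule r_nonneg)
      have ggr: "norm (g (x 0) + gr 0) \<le> W" unfolding W_def using norm_triangle_le gb[of 0] grb[of 0] by (meson add_mono)
      have aW: "aa \<le> W"
      proof -
        have "(norm (u 0))\<^sup>2 / al = - ((g (x 0) + gr 0) \<bullet> u 0)" using gu[of 0] unfolding al_def by simp
        also have "\<dots> \<le> norm (g (x 0) + gr 0) * norm (u 0)"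
          using Cauchy_Schwarz_ineq2[of "g (x 0) + gr 0" "u 0"] abs_ge_minus_self[of "(g (x 0) + gr 0) \<bullet> u 0"] by linarith
        also have "\<dots> \<le> W * norm (u 0)" using ggr by (intro mult_right_mono) auto
        finally have "norm (u 0) * aa \<le> norm (u 0) * W"
          unfolding aa_def using alp by (simp add: power2_eq_square algebra_simps)
        then show ?thesis using up by simp
      qed
      have gs: "g (x 0) \<bullet> s 0 \<le> W * V - al * aa\<^sup>2 + r (x 0) - r1"
      proof -
        have e1: "g (x 0) \<bullet> u 0 = - (norm (u 0))\<^sup>2 / al - gr 0 \<bullet> u 0"
          using gu[of 0] unfolding al_def by (simp add: inner_add_left algebra_simps)
        have e2: "gr 0 \<bullet> u 0 = gr 0 \<bullet> s 0 - gr 0 \<bullet> v 0" by (simp add: s_def inner_add_right)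
        have e3: "g (x 0) \<bullet> v 0 + gr 0 \<bullet> v 0 \<le> W * V"
          using norm_cauchy_schwarz[of "g (x 0) + gr 0" "v 0"] ggr V0
          by (simp add: inner_add_left V_def) (meson mult_right_mono norm_ge_zero order_trans)
        have e4: "(norm (u 0))\<^sup>2 / al = al * aa\<^sup>2" unfolding uaa using alp by (simp add: power2_eq_square)
        have e5: "r1 - r (x 0) \<le> gr 0 \<bullet> s 0" using rs[of 0] unfolding r1_def .
        have "g (x 0) \<bullet> s 0 = g (x 0) \<bullet> v 0 + g (x 0) \<bullet> u 0" by (simp add: s_def inner_add_right)
        then show ?thesis using e1 e2 e3 e4 e5 by linarith
      qed
      have Qe: "(norm (s 0))\<^sup>2 = V\<^sup>2 + al\<^sup>2 * aa\<^sup>2" using ns[of 0] unfolding V_def uaa by (simp add: power_mult_distrib)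
      have tmin_le: "taumin \<le> 1 / (K * al)"
      proof -
        have "taumin \<le> taumintrial" unfolding taumin_def using epstau tmt_pos
          by (smt (verit) min.cobounded2 mult_left_le_one_le)
        also have "\<dots> \<le> (1 - sigc) * (sigmin / kgc)\<^sup>2 / (K * alpha 0)" unfolding taumintrial_def by simp
        also have "\<dots> \<le> 1 / (K * alpha 0)"
        proof -
          have "sigmin / kgc \<le> 1" using sig_le kpos by simp
          then have "(sigmin / kgc)\<^sup>2 \<le> 1" using sigmin_pos kpos by (simp add: power_le_one)
          then have "(1 - sigc) * (sigmin / kgc)\<^sup>2 \<le> 1 * 1" using sigc by (intro mult_mono) auto
          then show ?thesis using K_pos alpha0_pos by (intro divide_right_mono) auto
        qed
        finally show ?thesis unfolding al_def .
      qed
      have WV: "W * V \<le> nc / (2 * taumin)"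
      proof -
        have "V \<le> kv * al * norm (a 0)" using vb[of 0] unfolding V_def al_def .
        also have "\<dots> \<le> kv * al * (kgc * nc)" using ab[of 0] kv_pos alp unfolding nc_def by (intro mult_left_mono) auto
        finally have V1: "V \<le> kv * al * kgc * nc" by (simp add: algebra_simps)
        have K2: "2 * kv * kgc * W \<le> K" unfolding K_def W_def using kv_pos kpos sigbar_le
          by (simp add: algebra_simps mult_pos_pos)
        have "W * V * taumin \<le> W * (kv * al * kgc * nc) * (1 / (K * al))"
          using V1 tmin_le W0 taumin_pos V0 nc0 kv_pos alp kpos
          by (intro mult_mono mult_left_mono) auto
        also have "\<dots> = (2 * kv * kgc * W) * nc / (2 * K)" using alp K_pos by (simp add: field_simps)
        also have "\<dots> \<le> K * nc / (2 * K)" using K2 nc0 K_pos by (intro divide_right_mono mult_right_mono) auto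
        also have "\<dots> = nc / 2" using K_pos by simp
        finally have "W * V * taumin \<le> nc / 2" .
        then show ?thesis using taumin_pos by (simp add: pos_le_divide_eq algebra_simps)
      qed
      define P where "P = eta * sigu * alphamin * eps\<^sup>2"
      have NP: "M 0 < taumin * P"
      proof -
        have "kPhi * eps\<^sup>2 \<le> eta * m1 * eps\<^sup>2" using kP1 eps2 by (intro mult_right_mono) auto
        then show ?thesis using Nlt unfolding P_def m1_def by (simp add: algebra_simps)
      qed
      have amLg: "alphamin * Lg < 1"
      proof -
        have "alphamin \<le> xi * T" unfolding alphamin_def T_def by simp
        moreover have "T * Lg < 1"
        proof -
          have tp: "taumin * Lg + LJ > 0" using taumin_pos kpos by (simp add: add_pos_pos)
          have "T * Lg = taumin * Lg / (taumin * Lg + LJ)" unfolding T_def by simp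
          also have "\<dots> < 1" using tp kpos by (simp add: divide_less_eq)
          finally show ?thesis .
        qed
        ultimately have "alphamin * Lg \<le> xi * (T * Lg)" using kpos by (simp add: mult_right_mono mult.assoc)
        also have "\<dots> < 1" using \<open>T * Lg < 1\<close> xi T_pos kpos
          by (smt (verit) mult_left_le_one_le mult_pos_pos)
        finally show ?thesis .
      qed
      have etasu: "eta * sigu \<le> 1 * (1 / 2)" using eta sigu by (intro mult_mono) auto
      have P_le: "P \<le> alphamin * eps\<^sup>2 / 2"
      proof -
        have "P = (eta * sigu) * (alphamin * eps\<^sup>2)" unfolding P_def by (simp add: algebra_simps)
        also have "\<dots> \<le> (1 * (1 / 2)) * (alphamin * eps\<^sup>2)" using etasu alphamin_pos eps2 by (intro mult_right_mono) auto
        finally show ?thesis by simp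
      qed
      have ea: "eps\<^sup>2 \<le> aa\<^sup>2" using agt' eps_pos by (intro power_mono) auto
      have LV: "Lg * V \<le> 2 * W"
      proof -
        have "nc / (2 * taumin) \<le> M 0 / (2 * taumin)" using ncM taumin_pos by (intro divide_right_mono) auto
        then have "W * V \<le> M 0 / (2 * taumin)" using WV by linarith
        also have "\<dots> < P / 2" using NP taumin_pos by (simp add: field_simps)
        also have "\<dots> \<le> alphamin * eps\<^sup>2 / 4" using P_le by simp
        finally have "W * V \<le> alphamin * eps\<^sup>2 / 4" by simp
        then have "W * V * Lg \<le> alphamin * eps\<^sup>2 / 4 * Lg" using kpos by (intro mult_right_mono) auto
        then have "W * V * Lg \<le> (alphamin * Lg) * eps\<^sup>2 / 4" by (simp add: algebra_simps)
        also have "\<dots> \<le> 1 * eps\<^sup>2 / 4" using amLg eps2 by (intro divide_right_mono mult_right_mono) auto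
        also have "\<dots> \<le> W * W"
        proof -
          have "eps * eps \<le> W * W" using agt' aW eps_pos by (intro mult_mono) auto
          moreover have "W * W \<ge> 0" by simp
          ultimately show ?thesis unfolding power2_eq_square by linarith
        qed
        finally have "W * (Lg * V) \<le> W * (2 * W)" using W0 by (simp add: algebra_simps)
        then show ?thesis using W0 by simp
      qed
      have AP: "A + r (x 0) + 2 * W * V < P"
      proof -
        have "taumin * (A + r (x 0)) \<le> tau 0 * (A + r (x 0))" using tau_ge[of 0] A0 r00 by (intro mult_right_mono) auto
        also have "\<dots> = M 0 - nc" using Meq by simp
        finally have h: "taumin * (A + r (x 0)) \<le> M 0 - nc" .
        have "taumin * (A + r (x 0) + 2 * W * V) = taumin * (A + r (x 0)) + 2 * (taumin * (W * V))" by (simp add: algebra_simps)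
        also have "\<dots> \<le> M 0 - nc + nc" using h WV taumin_pos by (simp add: field_simps)
        also have "\<dots> < taumin * P" using NP by simp
        finally show ?thesis using taumin_pos by simp
      qed
      have Hall: "0 < P - t * al * aa\<^sup>2 + Lg * t\<^sup>2 * al\<^sup>2 * aa\<^sup>2 / 2" if t: "0 \<le> t" "t \<le> 1" for t
      proof (rule b0_mid[OF t _ gs Qe r00 r10 less_imp_le[OF W0] V0 kpos(5) LV AP])
        have ztX: "x 0 + t *\<^sub>R s 0 \<in> X"
        proof -
          have "x 0 + t *\<^sub>R s 0 = (1 - t) *\<^sub>R x 0 + t *\<^sub>R (x 0 + s 0)" by (simp add: algebra_simps)
          then show ?thesis using convexD_alt[OF X_convex x_in_X trial_in_X, of t] t by simp
        qed
        have "f (x 0 + t *\<^sub>R s 0) \<le> f (x 0) + g (x 0) \<bullet> (t *\<^sub>R s 0) + Lg / 2 * (norm (t *\<^sub>R s 0))\<^sup>2"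
          by (rule descent_f[OF f_deriv X_convex x_in_X ztX g_lip])
        moreover have "f (x 0 + t *\<^sub>R s 0) \<ge> finf" using f_lb[OF ztX] .
        ultimately show "0 \<le> A + t * (g (x 0) \<bullet> s 0) + Lg / 2 * t\<^sup>2 * (norm (s 0))\<^sup>2"
          unfolding A_def using t by (simp add: power_mult_distrib)
      qed
      have P1: "P \<le> aa\<^sup>2 / (2 * Lg)"
      proof -
        have "alphamin * eps\<^sup>2 \<le> (1 / Lg) * aa\<^sup>2"
          using amLg ea alphamin_pos kpos eps2 by (intro mult_mono) (auto simp: field_simps)
        then show ?thesis using P_le by (simp add: field_simps)
      qed
      have P2: "P \<le> al * aa\<^sup>2 / 2"
      proof -
        have "alphamin \<le> al" unfolding alphamin_def al_def by simp
        then have "alphamin * eps\<^sup>2 \<le> al * aa\<^sup>2" using ea alphamin_pos eps2 by (intro mult_mono) auto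
        then show ?thesis using P_le by simp
      qed
      show False by (rule b0_final[OF kpos(5) alp Hall P1 P2])
    qed
    have "chi 0 \<le> eps" unfolding chi_eq using c_ok u_ok unfolding nc_def by simp
    then show ?thesis using True by auto
  next
    case False
    then have B1: "B \<ge> 1" using B0 by simp
    show ?thesis
    proof (rule ccontr)
      assume H: "\<not> ?thesis"
      have H': "chi k > eps" if "int k \<le> (U + 1) * B" for k
        using H that unfolding U_def L_def by force
      have UB0: "(U + 1) * B \<ge> 0" using U0 B0 by simp
      define n where "n = nat ((U + 1) * B) + 1"
      have nint: "int n = (U + 1) * B + 1" unfolding n_def using UB0 by simp
      have "\<forall>i<n. chi i > eps" using H' unfolding n_def by (intro allI impI H') (use UB0 in linarith)
      then have "M n \<le> M 0 - real (Sc n) * (kPhi * eps\<^sup>2)" by (rule count_run)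
      then have "real (Sc n) * (kPhi * eps\<^sup>2) \<le> M 0" using M_nonneg[of n] by linarith
      then have "real (Sc n) \<le> M 0 / (kPhi * eps\<^sup>2)" using kPhi_pos eps2 by (simp add: pos_le_divide_eq)
      then have ScB: "int (Sc n) \<le> B" unfolding B_def N_eq[symmetric] by (simp add: le_floor_iff)
      have "int n = int (Fc n) + int (Sc n)" using FS[of n] by simp
      also have "\<dots> \<le> U + B" using F_le[of n] ScB by simp
      finally have "(U + 1) * B + 1 \<le> U + B" using nint by simp
      moreover have "U * B \<ge> U" using U0 B1 by (simp add: mult_le_cancel_left1 mult_left_mono) 
      ultimately show False by (simp add: algebra_simps)
    qed
  qed
  show ?thesis using claim1 claim2 by blast
qed

end
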